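(* Let $\mathcal{C}$ be a class of $\Sigma$-algebras. If $\dot\Sigma^*/{\dot\sim_{\mathcal{C}}}$ is finite, then $\mathbf{T}_{\le 1}/{\sim_{\mathcal{C}}}$ is finite.
   Context: $\Sigma$ is a finite algebraic signature and $V$ a non-empty finite set of variables; $\mathbf{T}$ is the set of $\Sigma$-terms over $V$. A $\Sigma$-algebra has a non-empty finite universe and an interpretation of each function symbol; $t \sim_{\mathcal{C}} s$ iff $t$ and $s$ evaluate equally under all valuations in all algebras in $\mathcal{C}$. $\mathrm{vo}(t)$ is the number of variable occurrences in $t$, and $\mathbf{T}_{\le k}=\{t\in\mathbf{T} : \mathrm{vo}(t)\le k\}$. $\dot\Sigma$ is the (possibly infinite) set of characters $f(t_1,\dots,t_{i-1},\_,t_{i+1},\dots,t_n)$ where $f\in\Sigma$ is $n$-ary, $i\in\{1,\dots,n\}$, and each $t_j$ ($j\ne i$) is a term with $\mathrm{vo}(t_j)=0$. For a word $w\in\dot\Sigma^*$ and a term $t$, $w[t]$ is defined by $\varepsilon[t] = t$ and $(f(t_1,\dots,\_,\dots,t_n)\,w')[t] = f(t_1,\dots,t_{i-1},w'[t],t_{i+1},\dots,t_n)$. The equivalence $\dot\sim_{\mathcal{C}}$ on $\dot\Sigma^*$ is: $w\ \dot\sim_{\mathcal{C}}\ w'$ iff $w[a]\sim_{\mathcal{C}} w'[a]$, where $a\in V$ is any variable. *)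

theory Defs
  imports Main
begin

datatype ('f, 'v) trm = Var 'v | Fun 'f "('f, 'v) trm list"

fun wf_trm :: "'f set \<Rightarrow> ('f \<Rightarrow> nat) \<Rightarrow> 'v set \<Rightarrow> ('f, 'v) trm \<Rightarrow> bool" where
  "wf_trm Sig ar V (Var x) = (x \<in> V)"
| "wf_trm Sig ar V (Fun f ts) = (f \<in> Sig \<and> length ts = ar f \<and> (\<forall>t\<in>set ts. wf_trm Sig ar V t))"

definition Terms :: "'f set \<Rightarrow> ('f \<Rightarrow> nat) \<Rightarrow> 'v set \<Rightarrow> ('f, 'v) trm set" where
  "Terms Sig ar V = {t. wf_trm Sig ar V t}"

fun vo :: "('f, 'v) trm \<Rightarrow> nat" where
  "vo (Var x) = 1"
| "vo (Fun f ts) = sum_list (map vo ts)"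

definition Terms_le :: "'f set \<Rightarrow> ('f \<Rightarrow> nat) \<Rightarrow> 'v set \<Rightarrow> nat \<Rightarrow> ('f, 'v) trm set" where
  "Terms_le Sig ar V k = {t \<in> Terms Sig ar V. vo t \<le> k}"

type_synonym ('f, 'a) alg = "'a set \<times> ('f \<Rightarrow> 'a list \<Rightarrow> 'a)"

definition is_algebra :: "'f set \<Rightarrow> ('f \<Rightarrow> nat) \<Rightarrow> ('f, 'a) alg \<Rightarrow> bool" where
  "is_algebra Sig ar Al \<longleftrightarrow> finite (fst Al) \<and> fst Al \<noteq> {} \<and>
     (\<forall>f\<in>Sig. \<forall>as. length as = ar f \<and> set as \<subseteq> fst Al \<longrightarrow> snd Al f as \<in> fst Al)"

fun eval :: "('f \<Rightarrow> 'a list \<Rightarrow> 'a) \<Rightarrow> ('v \<Rightarrow> 'a) \<Rightarrow> ('f, 'v) trm \<Rightarrow> 'a" where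
  "eval I \<sigma> (Var x) = \<sigma> x"
| "eval I \<sigma> (Fun f ts) = I f (map (eval I \<sigma>) ts)"

definition equiv_C :: "('f, 'a) alg set \<Rightarrow> 'v set \<Rightarrow> ('f, 'v) trm \<Rightarrow> ('f, 'v) trm \<Rightarrow> bool" where
  "equiv_C C V t s \<longleftrightarrow>
     (\<forall>Al\<in>C. \<forall>\<sigma>. (\<forall>x\<in>V. \<sigma> x \<in> fst Al) \<longrightarrow> eval (snd Al) \<sigma> t = eval (snd Al) \<sigma> s)"

definition equiv_C_rel :: "('f, 'a) alg set \<Rightarrow> 'v set \<Rightarrow> ('f, 'v) trm set \<Rightarrow> (('f, 'v) trm \<times> ('f, 'v) trm) set" where
  "equiv_C_rel C V X = {(t, s). t \<in> X \<and> s \<in> X \<and> equiv_C C V t s}"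

text \<open>Dotted characters f(t_1,...,t_{i-1},_,t_{i+1},...,t_n): represented as (f, pre, post)
  with pre = [t_1..t_{i-1}], post = [t_{i+1}..t_n] ground (vo = 0) terms.\<close>
type_synonym ('f, 'v) dchar = "'f \<times> ('f, 'v) trm list \<times> ('f, 'v) trm list"

definition DSig :: "'f set \<Rightarrow> ('f \<Rightarrow> nat) \<Rightarrow> 'v set \<Rightarrow> ('f, 'v) dchar set" where
  "DSig Sig ar V = {(f, pre, post). f \<in> Sig \<and> length pre + 1 + length post = ar f \<and>
      (\<forall>t\<in>set pre \<union> set post. t \<in> Terms Sig ar V \<and> vo t = 0)}"

fun plug :: "('f, 'v) dchar list \<Rightarrow> ('f, 'v) trm \<Rightarrow> ('f, 'v) trm" where
  "plug [] t = t"
| "plug ((f, pre, post) # w) t = Fun f (pre @ [plug w t] @ post)"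

definition DWords :: "'f set \<Rightarrow> ('f \<Rightarrow> nat) \<Rightarrow> 'v set \<Rightarrow> ('f, 'v) dchar list set" where
  "DWords Sig ar V = {w. set w \<subseteq> DSig Sig ar V}"

text \<open>w dot-equivalent w' iff w[a] ~_C w'[a]; the choice of a in V is irrelevant, we quantify over all a.\<close>
definition dequiv_C :: "('f, 'a) alg set \<Rightarrow> 'v set \<Rightarrow> ('f, 'v) dchar list \<Rightarrow> ('f, 'v) dchar list \<Rightarrow> bool" where
  "dequiv_C C V w w' \<longleftrightarrow> (\<forall>a\<in>V. equiv_C C V (plug w (Var a)) (plug w' (Var a)))"

definition dequiv_C_rel :: "'f set \<Rightarrow> ('f \<Rightarrow> nat) \<Rightarrow> ('f, 'a) alg set \<Rightarrow> 'v set \<Rightarrow> (('f, 'v) dchar list \<times> ('f, 'v) dchar list) set" where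
  "dequiv_C_rel Sig ar C V = {(w, w'). w \<in> DWords Sig ar V \<and> w' \<in> DWords Sig ar V \<and> dequiv_C C V w w'}"

end

theory Submission
  imports Defs
begin

lemma vo0_eval: "vo t = 0 \<Longrightarrow> eval I \<sigma> t = eval I \<sigma>' t"
proof (induction t)
  case (Var x) then show ?case by simp
next
  case (Fun f ts)
  have "\<forall>t\<in>set ts. vo t = 0" using Fun.prems by (simp add: sum_list_eq_0_iff)
  then show ?case using Fun.IH by (simp cong: map_cong)
qed

definition GW :: "('f, 'v) dchar list \<Rightarrow> bool" where
  "GW w \<longleftrightarrow> (\<forall>(f,pre,post)\<in>set w. \<forall>t\<in>set pre \<union> set post. vo t = 0)"

lemma plug_eval: "GW w \<Longrightarrow> eval I \<sigma> t = eval I \<sigma>' s \<Longrightarrow> eval I \<sigma> (plug w t) = eval I \<sigma>' (plug w s)"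
proof (induction w)
  case Nil then show ?case by simp
next
  case (Cons c w)
  obtain f pre post where c: "c = (f,pre,post)" by (cases c) auto
  have g: "GW w" using Cons.prems by (simp add: GW_def)
  have pre: "map (eval I \<sigma>) pre = map (eval I \<sigma>') pre"
    using Cons.prems c by (auto simp: GW_def intro!: map_cong vo0_eval)
  have post: "map (eval I \<sigma>) post = map (eval I \<sigma>') post"
    using Cons.prems c by (auto simp: GW_def intro!: map_cong vo0_eval)
  show ?case unfolding c
    by (simp only: plug.simps eval.simps list.map map_append pre post Cons.IH[OF g Cons.prems(2)])
qed

lemma DWords_GW: "w \<in> DWords Sig ar V \<Longrightarrow> GW w"
  by (auto simp: DWords_def DSig_def GW_def)

lemma plug_wf: "w \<in> DWords Sig ar V \<Longrightarrow> wf_trm Sig ar V t \<Longrightarrow> wf_trm Sig ar V (plug w t)"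
proof (induction w)
  case Nil then show ?case by simp
next
  case (Cons c w)
  obtain f pre post where c: "c = (f,pre,post)" by (cases c) auto
  have "w \<in> DWords Sig ar V" using Cons.prems by (simp add: DWords_def)
  then have "wf_trm Sig ar V (plug w t)" using Cons by blast
  then show ?case using Cons.prems c by (auto simp: DWords_def DSig_def Terms_def)
qed

lemma plug_vo: "GW w \<Longrightarrow> vo (plug w t) = vo t"
proof (induction w)
  case Nil then show ?case by simp
next
  case (Cons c w)
  obtain f pre post where c: "c = (f,pre,post)" by (cases c) auto
  have g: "GW w" using Cons.prems by (simp add: GW_def)
  have "sum_list (map vo pre) = 0" "sum_list (map vo post) = 0"
    using Cons.prems c by (auto simp: GW_def sum_list_eq_0_iff)
  then show ?case using Cons.IH[OF g] c by simp
qed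

lemma split_list_vo:
  "ts \<noteq> [] \<Longrightarrow> sum_list (map vo ts) \<le> 1 \<Longrightarrow>
   \<exists>pre u post. ts = pre @ [u] @ post \<and> (\<forall>t\<in>set pre \<union> set post. vo t = 0)"
proof (induction ts)
  case Nil then show ?case by simp
next
  case (Cons a rest)
  show ?case
  proof (cases "vo a = 0")
    case True
    show ?thesis
    proof (cases "rest = []")
      case True then show ?thesis by (intro exI[of _ "[]"] exI[of _ a] exI[of _ "[]"]) simp
    next
      case False
      then obtain pre u post where "rest = pre @ [u] @ post" "\<forall>t\<in>set pre \<union> set post. vo t = 0"
        using Cons.IH Cons.prems \<open>vo a = 0\<close> by auto
      then show ?thesis using \<open>vo a = 0\<close>
        by (intro exI[of _ "a # pre"] exI[of _ u] exI[of _ post]) auto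
    qed
  next
    case False
    have "vo a + sum_list (map vo rest) \<le> 1" using Cons.prems by simp
    then have "sum_list (map vo rest) = 0" using False by linarith
    then have "\<forall>t\<in>set rest. vo t = 0" by (simp add: sum_list_eq_0_iff)
    then show ?thesis by (intro exI[of _ "[]"] exI[of _ a] exI[of _ rest]) auto
  qed
qed

lemma decomp:
  "wf_trm Sig ar V t \<Longrightarrow> vo t \<le> 1 \<Longrightarrow>
   \<exists>w. w \<in> DWords Sig ar V \<and> ((\<exists>x\<in>V. t = plug w (Var x)) \<or> (\<exists>c\<in>Sig. ar c = 0 \<and> t = plug w (Fun c [])))"
proof (induction t)
  case (Var x) then show ?case by (intro exI[of _ "[]"]) (auto simp: DWords_def)
next
  case (Fun f ts)
  show ?case
  proof (cases "ts = []")
    case True then show ?thesis using Fun.prems by (intro exI[of _ "[]"]) (auto simp: DWords_def)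
  next
    case False
    then obtain pre u post where sp: "ts = pre @ [u] @ post" "\<forall>t\<in>set pre \<union> set post. vo t = 0"
      using split_list_vo[of ts] Fun.prems by auto
    have u: "u \<in> set ts" using sp by simp
    have wfu: "wf_trm Sig ar V u" using Fun.prems u by auto
    have vou: "vo u \<le> 1" using Fun.prems sp by simp
    obtain w where w: "w \<in> DWords Sig ar V"
      "(\<exists>x\<in>V. u = plug w (Var x)) \<or> (\<exists>c\<in>Sig. ar c = 0 \<and> u = plug w (Fun c []))"
      using Fun.IH[OF u wfu vou] by blast
    have "(f,pre,post) \<in> DSig Sig ar V"
      using Fun.prems sp by (auto simp: DSig_def Terms_def)
    then have "(f,pre,post) # w \<in> DWords Sig ar V" using w by (simp add: DWords_def)
    then show ?thesis using w sp by (intro exI[of _ "(f,pre,post) # w"]) auto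
  qed
qed

theorem lemma2p11:
  fixes Sig :: "'f set" and ar :: "'f \<Rightarrow> nat" and V :: "'v set"
    and C :: "('f, 'a) alg set"
  assumes "finite Sig" and "finite V" and "V \<noteq> {}"
    and "\<forall>Al\<in>C. is_algebra Sig ar Al"
    and "finite (DWords Sig ar V // dequiv_C_rel Sig ar C V)"
  shows "finite (Terms_le Sig ar V 1 // equiv_C_rel C V (Terms_le Sig ar V 1))"
proof -
  let ?T = "Terms_le Sig ar V 1"
  let ?R = "equiv_C_rel C V ?T"
  let ?D = "dequiv_C_rel Sig ar C V"
  let ?Q = "DWords Sig ar V // ?D"
  define rep where "rep X = (SOME w. w \<in> X)" for X :: "('f, 'v) dchar list set"
  define S where "S = ((\<lambda>(X,x). plug (rep X) (Var x)) ` (?Q \<times> V)) \<union>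
                      ((\<lambda>(X,c). plug (rep X) (Fun c [])) ` (?Q \<times> Sig))"
  have finS: "finite S" unfolding S_def using assms by auto
  have eqv: "equiv ?T ?R"
    by (rule equivI) (auto simp: equiv_C_rel_def equiv_C_def refl_on_def sym_def trans_def)
  have repw: "(w, rep (?D `` {w})) \<in> ?D" if "w \<in> DWords Sig ar V" for w
  proof -
    have "w \<in> ?D `` {w}" using that by (simp add: dequiv_C_rel_def dequiv_C_def equiv_C_def)
    then have "rep (?D `` {w}) \<in> ?D `` {w}" unfolding rep_def by (rule someI)
    then show ?thesis by simp
  qed
  have inT: "plug w b \<in> ?T" if "w \<in> DWords Sig ar V" "wf_trm Sig ar V b" "vo b \<le> 1" for w b
    using that plug_wf plug_vo DWords_GW by (fastforce simp: Terms_le_def Terms_def)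
  have main: "\<exists>s\<in>S. (t, s) \<in> ?R" if t: "t \<in> ?T" for t
  proof -
    have "wf_trm Sig ar V t" "vo t \<le> 1" using t by (auto simp: Terms_le_def Terms_def)
    then obtain w where w: "w \<in> DWords Sig ar V"
      "(\<exists>x\<in>V. t = plug w (Var x)) \<or> (\<exists>c\<in>Sig. ar c = 0 \<and> t = plug w (Fun c []))"
      using decomp by blast
    define X where "X = ?D `` {w}"
    have XQ: "X \<in> ?Q" unfolding X_def quotient_def using w(1) by blast
    have wr: "(w, rep X) \<in> ?D" unfolding X_def using repw w(1) by blast
    then have rD: "rep X \<in> DWords Sig ar V" and dq: "dequiv_C C V w (rep X)"
      by (auto simp: dequiv_C_rel_def)
    from w(2) show ?thesis
    proof
      assume "\<exists>x\<in>V. t = plug w (Var x)"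
      then obtain x where x: "x \<in> V" "t = plug w (Var x)" by blast
      have "plug (rep X) (Var x) \<in> S" unfolding S_def using XQ x by force
      moreover have "plug (rep X) (Var x) \<in> ?T" using rD x by (intro inT) auto
      moreover have "equiv_C C V t (plug (rep X) (Var x))" using dq x by (simp add: dequiv_C_def)
      ultimately show ?thesis using t by (auto simp: equiv_C_rel_def)
    next
      assume "\<exists>c\<in>Sig. ar c = 0 \<and> t = plug w (Fun c [])"
      then obtain c where c: "c \<in> Sig" "ar c = 0" "t = plug w (Fun c [])" by blast
      obtain a where a: "a \<in> V" using assms(3) by blast
      have "plug (rep X) (Fun c []) \<in> S" unfolding S_def using XQ c by force
      moreover have "plug (rep X) (Fun c []) \<in> ?T" using rD c by (intro inT) auto
      moreover have "equiv_C C V t (plug (rep X) (Fun c []))"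
        unfolding equiv_C_def
      proof (intro ballI allI impI)
        fix Al \<sigma> assume Al: "Al \<in> C" and sg: "\<forall>x\<in>V. \<sigma> x \<in> fst Al"
        define \<sigma>' where "\<sigma>' = \<sigma>(a := snd Al c [])"
        have "snd Al c [] \<in> fst Al" using assms(4) Al c unfolding is_algebra_def by auto
        then have sg': "\<forall>x\<in>V. \<sigma>' x \<in> fst Al" using sg by (simp add: \<sigma>'_def)
        have e: "eval (snd Al) \<sigma> (Fun c []) = eval (snd Al) \<sigma>' (Var a)" by (simp add: \<sigma>'_def)
        have "eval (snd Al) \<sigma> t = eval (snd Al) \<sigma>' (plug w (Var a))"
          using plug_eval[OF DWords_GW[OF w(1)] e] c by simp
        also have "\<dots> = eval (snd Al) \<sigma>' (plug (rep X) (Var a))"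
          using dq a Al sg' by (auto simp: dequiv_C_def equiv_C_def)
        also have "\<dots> = eval (snd Al) \<sigma> (plug (rep X) (Fun c []))"
          using plug_eval[OF DWords_GW[OF rD] e[symmetric]] by simp
        finally show "eval (snd Al) \<sigma> t = eval (snd Al) \<sigma> (plug (rep X) (Fun c []))" .
      qed
      ultimately show ?thesis using t by (auto simp: equiv_C_rel_def)
    qed
  qed
  have "?T // ?R \<subseteq> (\<lambda>s. ?R `` {s}) ` S"
  proof
    fix Y assume "Y \<in> ?T // ?R"
    then obtain t where t: "t \<in> ?T" "Y = ?R `` {t}" by (auto simp: quotient_def)
    obtain s where "s \<in> S" "(t, s) \<in> ?R" using main[OF t(1)] by blast
    then have "?R `` {t} = ?R `` {s}" using equiv_class_eq[OF eqv] by blast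
    then show "Y \<in> (\<lambda>s. ?R `` {s}) ` S" using t \<open>s \<in> S\<close> by blast
  qed
  then show ?thesis using finS finite_subset by blast
qed

end
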